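(* Let $\Delta_0, \ldots, \Delta_n$ be a sequence of positive integers with $n \geq 1$. Then there exist indices $\alpha, \beta \in \{0,1,\ldots,n\}$ such that: (1) $\alpha < \beta$; (2) $\Delta_j > \max(\Delta_\alpha, \Delta_\beta)$ for every $j \in \{0,\ldots,\alpha-1\} \cup \{\beta+1,\ldots,n\}$; (3) the inequality $\Delta_t < \max(\Delta_\alpha,\Delta_\beta)$ holds for at most one index $t \in \{\alpha, \alpha+1, \ldots, \beta\}$. *)

theory Defs
  imports Main
begin

end

theory Submission
  imports Defs
begin

lemma aux:
  fixes D :: "nat \<Rightarrow> nat" and n :: nat
  shows "\<forall>a b. b - a = k \<longrightarrow> a < b \<longrightarrow> b \<le> n \<longrightarrow>
     (\<forall>j \<in> {0..<a} \<union> {b<..n}. D j > max (D a) (D b)) \<longrightarrow>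
     (\<exists>\<alpha> \<beta>. \<alpha> < \<beta> \<and> \<beta> \<le> n \<and>
     (\<forall>j \<in> {0..<\<alpha>} \<union> {\<beta><..n}. D j > max (D \<alpha>) (D \<beta>)) \<and>
     card {t \<in> {\<alpha>..\<beta>}. D t < max (D \<alpha>) (D \<beta>)} \<le> 1)"
proof (induction k rule: less_induct)
  case (less k)
  show ?case
  proof (intro allI impI)
    fix a b
    assume k: "b - a = k" and ab: "a < b" and bn: "b \<le> n"
      and inv: "\<forall>j \<in> {0..<a} \<union> {b<..n}. D j > max (D a) (D b)"
    define M where "M = max (D a) (D b)"
    define S where "S = {t \<in> {a..b}. D t < M}"
    show "\<exists>\<alpha> \<beta>. \<alpha> < \<beta> \<and> \<beta> \<le> n \<and>
     (\<forall>j \<in> {0..<\<alpha>} \<union> {\<beta><..n}. D j > max (D \<alpha>) (D \<beta>)) \<and>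
     card {t \<in> {\<alpha>..\<beta>}. D t < max (D \<alpha>) (D \<beta>)} \<le> 1"
    proof (cases "card S \<le> 1")
      case True
      then show ?thesis using ab bn inv unfolding S_def M_def by blast
    next
      case False
      have fin: "finite S" unfolding S_def by simp
      have ne: "S \<noteq> {}" using False by auto
      define a' where "a' = Min S"
      define b' where "b' = Max S"
      have a'S: "a' \<in> S" using fin ne a'_def by simp
      have b'S: "b' \<in> S" using fin ne b'_def by simp
      have lt: "a' < b'"
      proof (rule ccontr)
        assume "\<not> a' < b'"
        have "a' \<le> b'" using fin b'S a'_def by simp
        then have "a' = b'" using \<open>\<not> a' < b'\<close> by simp
        have "S \<subseteq> {a'}"
        proof
          fix x assume "x \<in> S"
          then have "a' \<le> x" "x \<le> b'" using fin a'_def b'_def by auto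
          then show "x \<in> {a'}" using \<open>a' = b'\<close> by simp
        qed
        then have "card S \<le> card {a'}" by (intro card_mono) auto
        then have "card S \<le> 1" by simp
        then show False using False by simp
      qed
      have "D a' < M" "D b' < M" using a'S b'S unfolding S_def by auto
      then have ma: "D a \<le> M" "D b \<le> M" unfolding M_def by auto
      have aa: "a \<le> a'" using a'S unfolding S_def by auto
      have bb: "b' \<le> b" using b'S unfolding S_def by auto
      have nb: "\<not> (a' = a \<and> b' = b)" using \<open>D a' < M\<close> \<open>D b' < M\<close> unfolding M_def by auto
      have a'b: "a' \<le> b" "a \<le> b'" using aa bb lt by auto
      have inv': "\<forall>j \<in> {0..<a'} \<union> {b'<..n}. D j > max (D a') (D b')"
      proof
        fix j assume j: "j \<in> {0..<a'} \<union> {b'<..n}"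
        show "D j > max (D a') (D b')"
        proof (cases "j \<in> {a..b}")
          case True
          have "j \<notin> S"
          proof
            assume "j \<in> S"
            then have "a' \<le> j" "j \<le> b'" using fin a'_def b'_def by auto
            then show False using j by auto
          qed
          then have "D j \<ge> M" using True unfolding S_def by auto
          then show ?thesis using \<open>D a' < M\<close> \<open>D b' < M\<close> by auto
        next
          case False
          then have "j \<in> {0..<a} \<union> {b<..n}" using j a'b bn by auto
          then have "D j > M" using inv M_def by auto
          then show ?thesis using \<open>D a' < M\<close> \<open>D b' < M\<close> by auto
        qed
      qed
      have "b' - a' < k" using k aa bb lt nb by auto
      moreover have "b' \<le> n" using bb bn by simp
      ultimately show ?thesis using less.IH[of "b' - a'"] lt inv' by blast
    qed
  qed
qed

theorem lemma2p8:
  fixes D :: "nat \<Rightarrow> nat" and n :: nat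
  assumes "n \<ge> 1"
    and "\<And>i. i \<le> n \<Longrightarrow> D i > 0"
  shows "\<exists>\<alpha> \<beta>. \<alpha> < \<beta> \<and> \<beta> \<le> n \<and>
     (\<forall>j \<in> {0..<\<alpha>} \<union> {\<beta><..n}. D j > max (D \<alpha>) (D \<beta>)) \<and>
     card {t \<in> {\<alpha>..\<beta>}. D t < max (D \<alpha>) (D \<beta>)} \<le> 1"
proof -
  have "(0::nat) < n" "n - 0 = n" "\<forall>j \<in> {0..<0} \<union> {n<..n}. D j > max (D 0) (D n)" using assms(1) by auto
  then show ?thesis using aux[where D=D and n=n and k="n - 0"] by blast
qed

end
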